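(* Let $\lambda>0$, $L>0$, and let $d,k,T$ be positive integers. Let $\{\{x_t(i)\}_{i\in[k]}\}_{t\in[T]}$ be any sequence of vectors $x_t(i)\in\mathbb{R}^d$ with $\|x_t(i)\|_2\le L$ for all $i\in[k]$, $t\in[T]$. Let $V_0=\lambda I$ and $V_t=\lambda I+\sum_{t'\in[t]}\sum_{i\in[k]}x_{t'}(i)x_{t'}(i)^\top$ for $t\in[T]$. Then $$\sum_{t\in[T]}\sum_{i\in[k]}\min\Big(\frac{1}{\sqrt{k}},\ \|x_t(i)\|_{V_{t-1}^{-1}}\Big)=\tilde{O}\big(\sqrt{dkT}\big)$$ and $$\sum_{t\in[T]}\sum_{i\in[k]}\mathbb{1}\Big(\|x_t(i)\|_{V_{t-1}^{-1}}>1/\sqrt{k}\Big)=\tilde{O}(dk).$$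
   Context: For a positive definite matrix $A$ and vector $x$, $\|x\|_{A}=\sqrt{x^\top A x}$. $[n]=\{1,\dots,n\}$. The notation $\tilde{O}(\cdot)$ hides logarithmic factors (here, factors logarithmic in $1+L^2kT/(d\lambda)$). *)

theory Defs
  imports "Jordan_Normal_Form.Gauss_Jordan_Elimination"
begin

definition gram :: "real \<Rightarrow> nat \<Rightarrow> nat \<Rightarrow> (nat \<Rightarrow> nat \<Rightarrow> real vec) \<Rightarrow> nat \<Rightarrow> real mat" where
  "gram lam d k x t = lam \<cdot>\<^sub>m (1\<^sub>m d) +
     mat d d (\<lambda>(a, b). \<Sum>t'\<in>{1..t}. \<Sum>i\<in>{1..k}. (x t' i $ a) * (x t' i $ b))"

definition inv_norm :: "real mat \<Rightarrow> real vec \<Rightarrow> real" where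
  "inv_norm V y = sqrt (y \<bullet> (the (mat_inverse V) *\<^sub>v y))"

end

theory Submission
  imports Defs "Jordan_Normal_Form.Determinant"
begin

lemma det_col0:
  fixes A :: "real mat"
  assumes A: "A \<in> carrier_mat (Suc n) (Suc n)"
    and z: "\<And>i. 0 < i \<Longrightarrow> i < Suc n \<Longrightarrow> A $$ (i,0) = 0"
  shows "det A = A $$ (0,0) * det (mat n n (\<lambda>(i,j). A $$ (Suc i, Suc j)))"
proof -
  have "det A = (\<Sum>i<Suc n. A $$ (i,0) * cofactor A i 0)"
    by (rule laplace_expansion_column[OF A], simp)
  also have "\<dots> = A $$ (0,0) * cofactor A 0 0"
    unfolding sum.lessThan_Suc_shift using z by simp
  finally have e: "det A = A $$ (0,0) * cofactor A 0 0" .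
  have "mat_delete A 0 0 = mat n n (\<lambda>(i,j). A $$ (Suc i, Suc j))"
    unfolding mat_delete_def using A by (intro eq_matI) auto
  thus ?thesis using e unfolding cofactor_def by simp
qed

lemma det_schur:
  fixes A :: "real mat"
  assumes A: "A \<in> carrier_mat (Suc n) (Suc n)"
    and a: "A $$ (0,0) \<noteq> 0"
  shows "det A = A $$ (0,0) * det (mat n n (\<lambda>(i,j). A $$ (Suc i, Suc j) - A $$ (Suc i, 0) * A $$ (0, Suc j) / A $$ (0,0)))"
proof -
  define a where "a = A $$ (0,0)"
  define L where "L = mat (Suc n) (Suc n) (\<lambda>(i,j). (if j = i then 1 else 0) + (if j = 0 \<and> i \<noteq> 0 then - A $$ (i,0) / a else 0))"
  have L: "L \<in> carrier_mat (Suc n) (Suc n)" unfolding L_def by simp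
  have dL: "det L = 1"
  proof -
    have "det L = prod_list (diag_mat L)"
      by (rule det_lower_triangular[OF _ L]) (auto simp: L_def)
    also have "diag_mat L = map (\<lambda>_. 1) [0..<Suc n]"
      unfolding diag_mat_def L_def by (auto simp del: upt_Suc)
    finally show ?thesis by (simp add: map_replicate_const del: upt_Suc)
  qed
  have LA: "(L * A) $$ (i,j) = A $$ (i,j) + (if i \<noteq> 0 then - A $$ (i,0) / a * A $$ (0,j) else 0)"
    if "i < Suc n" "j < Suc n" for i j
  proof -
    have "(L * A) $$ (i,j) = (\<Sum>k\<in>{0..<Suc n}. L $$ (i,k) * A $$ (k,j))"
      using that A L by (simp add: scalar_prod_def)
    also have "\<dots> = (\<Sum>k\<in>{0..<Suc n}. (if k = i then A $$ (k,j) else 0) + (if k = 0 then (if i \<noteq> 0 then - A $$ (i,0) / a * A $$ (k,j) else 0) else 0))"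
      using that by (intro sum.cong refl) (auto simp: L_def algebra_simps)
    also have "\<dots> = A $$ (i,j) + (if i \<noteq> 0 then - A $$ (i,0) / a * A $$ (0,j) else 0)"
      unfolding sum.distrib using that by (simp add: sum.delta)
    finally show ?thesis .
  qed
  have LAc: "L * A \<in> carrier_mat (Suc n) (Suc n)" using L A by simp
  have "det (L * A) = det L * det A" by (rule det_mult[OF L A])
  hence "det A = det (L * A)" using dL by simp
  also have "\<dots> = (L * A) $$ (0,0) * det (mat n n (\<lambda>(i,j). (L * A) $$ (Suc i, Suc j)))"
    by (rule det_col0[OF LAc]) (auto simp: LA a_def assms)
  also have "mat n n (\<lambda>(i,j). (L * A) $$ (Suc i, Suc j)) = mat n n (\<lambda>(i,j). A $$ (Suc i, Suc j) - A $$ (Suc i, 0) * A $$ (0, Suc j) / A $$ (0,0))"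
    by (intro eq_matI) (auto simp: LA a_def)
  finally show ?thesis by (simp add: LA a_def)
qed

definition bil :: "real mat \<Rightarrow> nat \<Rightarrow> (nat \<Rightarrow> real) \<Rightarrow> (nat \<Rightarrow> real) \<Rightarrow> real" where
  "bil A n x y = (\<Sum>i<n. \<Sum>j<n. x i * A $$ (i,j) * y j)"

definition pdm :: "nat \<Rightarrow> real mat \<Rightarrow> bool" where
  "pdm n A \<longleftrightarrow> A \<in> carrier_mat n n \<and> (\<forall>i<n. \<forall>j<n. A $$ (i,j) = A $$ (j,i))
     \<and> (\<forall>y. (\<exists>i<n. y i \<noteq> 0) \<longrightarrow> 0 < bil A n y y)"

lemma pdmD:
  assumes "pdm n A"
  shows "A \<in> carrier_mat n n" "\<And>i j. i < n \<Longrightarrow> j < n \<Longrightarrow> A $$ (i,j) = A $$ (j,i)"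
    "\<And>y. (\<exists>i<n. y i \<noteq> 0) \<Longrightarrow> 0 < bil A n y y"
  using assms unfolding pdm_def by blast+

lemma sum_delta_r: "(k::nat) < n \<Longrightarrow> (\<Sum>j<n. (f j :: real) * (if j = k then 1 else 0)) = f k"
proof -
  assume k: "k < n"
  have "(\<Sum>j<n. (f j :: real) * (if j = k then 1 else 0)) = (\<Sum>j<n. if j = k then f j else 0)"
    by (rule sum.cong) auto
  also have "\<dots> = f k" using k by (simp only: sum.delta finite_lessThan lessThan_iff if_True)
  finally show ?thesis .
qed

lemma sum_delta_l: "(k::nat) < n \<Longrightarrow> (\<Sum>j<n. (if j = k then 1 else 0) * (f j :: real)) = f k"
  using sum_delta_r[of k n f] by (simp add: mult.commute)

lemma bil_unit: "i < n \<Longrightarrow> bil A n (\<lambda>k. if k = i then 1 else 0) (\<lambda>k. if k = i then 1 else 0) = A $$ (i,i)"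
proof -
  assume i: "i < n"
  have "bil A n (\<lambda>k. if k = i then 1 else 0) (\<lambda>k. if k = i then 1 else 0)
     = (\<Sum>k<n. (if k = i then 1 else 0) * A $$ (k,i))"
    unfolding bil_def by (rule sum.cong[OF refl], rule sum_delta_r[OF i])
  also have "\<dots> = A $$ (i,i)" by (rule sum_delta_l[OF i])
  finally show ?thesis .
qed

lemma pdm_diag: "pdm n A \<Longrightarrow> i < n \<Longrightarrow> 0 < A $$ (i,i)"
proof -
  assume p: "pdm n A" and i: "i < n"
  have "\<exists>j<n. (\<lambda>k. if k = i then 1 else (0::real)) j \<noteq> 0" using i by (intro exI[of _ i]) simp
  hence "0 < bil A n (\<lambda>k. if k = i then 1 else 0) (\<lambda>k. if k = i then 1 else 0)"
    by (rule pdmD(3)[OF p])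
  thus ?thesis using bil_unit[OF i] by simp
qed

lemma hadamard: "pdm n A \<Longrightarrow> det A \<le> (\<Prod>i<n. A $$ (i,i))"
proof (induction n arbitrary: A)
  case 0
  hence "A \<in> carrier_mat 0 0" by (rule pdmD)
  thus ?case by simp
next
  case (Suc n)
  have A: "A \<in> carrier_mat (Suc n) (Suc n)" and sym: "\<And>i j. i < Suc n \<Longrightarrow> j < Suc n \<Longrightarrow> A $$ (i,j) = A $$ (j,i)"
    using pdmD[OF Suc.prems] by auto
  define a where "a = A $$ (0,0)"
  have a: "0 < a" unfolding a_def by (rule pdm_diag[OF Suc.prems], simp)
  define S where "S = mat n n (\<lambda>(i,j). A $$ (Suc i, Suc j) - A $$ (Suc i, 0) * A $$ (0, Suc j) / a)"
  have Sij: "S $$ (i,j) = A $$ (Suc i, Suc j) - A $$ (Suc i, 0) * A $$ (0, Suc j) / a" if "i < n" "j < n" for i j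
    using that unfolding S_def by simp
  have pS: "pdm n S"
    unfolding pdm_def
  proof (intro conjI allI impI)
    show "S \<in> carrier_mat n n" unfolding S_def by simp
    fix i j assume "i < n" "j < n"
    thus "S $$ (i,j) = S $$ (j,i)" using sym[of "Suc i" "Suc j"] sym[of "Suc i" 0] sym[of "Suc j" 0]
      by (simp add: Sij)
  next
    fix y :: "nat \<Rightarrow> real" assume ex: "\<exists>i<n. y i \<noteq> 0"
    define c where "c = (\<Sum>j<n. A $$ (0, Suc j) * y j)"
    define z where "z = (\<lambda>i. if i = 0 then - c / a else y (i - 1))"
    obtain i0 where i0: "i0 < n" "y i0 \<noteq> 0" using ex by blast
    have "\<exists>i<Suc n. z i \<noteq> 0" using i0 by (intro exI[of _ "Suc i0"]) (simp add: z_def)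
    hence pos: "0 < bil A (Suc n) z z" by (rule pdmD(3)[OF Suc.prems])
    have zS: "\<And>i. z (Suc i) = y i" unfolding z_def by simp
    have z0: "z 0 = - c / a" unfolding z_def by simp
    have r: "(\<Sum>i<n. y i * A $$ (Suc i, 0)) = c" unfolding c_def
      using sym by (intro sum.cong refl) (simp add: mult.commute)
    have "bil A (Suc n) z z = (z 0 * a * z 0 + (\<Sum>j<n. z 0 * A $$ (0, Suc j) * y j))
         + (\<Sum>i<n. y i * A $$ (Suc i, 0) * z 0 + (\<Sum>j<n. y i * A $$ (Suc i, Suc j) * y j))"
      unfolding bil_def sum.lessThan_Suc_shift by (simp only: zS a_def[symmetric])
    also have "\<dots> = (\<Sum>i<n. \<Sum>j<n. y i * A $$ (Suc i, Suc j) * y j) - c * c / a"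
    proof -
      have 1: "(\<Sum>j<n. z 0 * A $$ (0, Suc j) * y j) = z 0 * c"
        unfolding c_def sum_distrib_left by (simp add: mult.assoc)
      have 2: "(\<Sum>i<n. y i * A $$ (Suc i, 0) * z 0) = c * z 0"
        using r by (simp add: sum_distrib_right[symmetric])
      have 3: "z 0 * a * z 0 + z 0 * c + c * z 0 = - (c * c / a)"
        unfolding z0 using a by (simp add: field_simps)
      show ?thesis unfolding sum.distrib 1 2 using 3 by simp
    qed
    also have "\<dots> = bil S n y y"
    proof -
      have "bil S n y y = (\<Sum>i<n. \<Sum>j<n. y i * A $$ (Suc i, Suc j) * y j - (y i * A $$ (Suc i, 0)) * (A $$ (0, Suc j) * y j) / a)"
        unfolding bil_def by (intro sum.cong refl) (simp add: Sij algebra_simps)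
      also have "\<dots> = (\<Sum>i<n. \<Sum>j<n. y i * A $$ (Suc i, Suc j) * y j) - (\<Sum>i<n. y i * A $$ (Suc i, 0)) * (\<Sum>j<n. A $$ (0, Suc j) * y j) / a"
        unfolding sum_subtractf by (simp add: sum_product sum_divide_distrib)
      finally show ?thesis unfolding r c_def[symmetric] by simp
    qed
    finally show "0 < bil S n y y" using pos by simp
  qed
  have "det A = a * det S" unfolding a_def S_def by (rule det_schur[OF A]) (use a a_def in auto)
  also have "\<dots> \<le> a * (\<Prod>i<n. S $$ (i,i))" using Suc.IH[OF pS] a by simp
  also have "\<dots> \<le> a * (\<Prod>i<n. A $$ (Suc i, Suc i))"
  proof -
    have "(\<Prod>i<n. S $$ (i,i)) \<le> (\<Prod>i<n. A $$ (Suc i, Suc i))"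
    proof (rule prod_mono)
      fix i assume i: "i \<in> {..<n}"
      have "A $$ (Suc i, 0) * A $$ (0, Suc i) / a \<ge> 0"
        using sym[of "Suc i" 0] i a by simp
      thus "0 \<le> S $$ (i,i) \<and> S $$ (i,i) \<le> A $$ (Suc i, Suc i)" using i pdm_diag[OF pS, of i] by (simp add: Sij)
    qed
    thus ?thesis using a by simp
  qed
  also have "\<dots> = (\<Prod>i<Suc n. A $$ (i,i))" unfolding prod.lessThan_Suc_shift a_def by simp
  finally show ?case .
qed

lemma mult_entry:
  fixes A B :: "real mat"
  assumes "A \<in> carrier_mat n n" "B \<in> carrier_mat n n" "i < n" "j < n"
  shows "(A * B) $$ (i,j) = (\<Sum>k<n. A $$ (i,k) * B $$ (k,j))"
  using assms by (simp add: scalar_prod_def atLeast0LessThan)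

lemma bil_cong: "(\<And>i. i < n \<Longrightarrow> x i = x' i) \<Longrightarrow> (\<And>i. i < n \<Longrightarrow> y i = y' i) \<Longrightarrow> bil A n x y = bil A n x' y'"
  unfolding bil_def by (intro sum.cong refl) auto

lemma bil_vec:
  fixes B :: "real mat"
  assumes "B \<in> carrier_mat n n" "x \<in> carrier_vec n" "y \<in> carrier_vec n"
  shows "x \<bullet> (B *\<^sub>v y) = bil B n (($) x) (($) y)"
proof -
  have "x \<bullet> (B *\<^sub>v y) = (\<Sum>i<n. x $ i * (\<Sum>j<n. B $$ (i,j) * y $ j))"
    using assms by (simp add: scalar_prod_def atLeast0LessThan)
  also have "\<dots> = bil B n (($) x) (($) y)"
    unfolding bil_def by (simp add: sum_distrib_left mult.assoc)
  finally show ?thesis .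
qed

lemma bil_sym:
  assumes "\<And>i j. i < n \<Longrightarrow> j < n \<Longrightarrow> A $$ (i,j) = A $$ (j,i)"
  shows "bil A n y x = bil A n x y"
proof -
  have "bil A n y x = (\<Sum>j<n. \<Sum>i<n. y j * A $$ (j,i) * x i)" unfolding bil_def by simp
  also have "\<dots> = (\<Sum>i<n. \<Sum>j<n. y j * A $$ (j,i) * x i)" by (rule sum.swap)
  also have "\<dots> = bil A n x y" unfolding bil_def
  proof (intro sum.cong refl)
    fix i j assume "i \<in> {..<n}" "j \<in> {..<n}"
    hence "A $$ (j,i) = A $$ (i,j)" using assms by simp
    thus "y j * A $$ (j,i) * x i = x i * A $$ (i,j) * y j" by simp
  qed
  finally show ?thesis .
qed

lemma pdm_nonneg: "pdm n A \<Longrightarrow> 0 \<le> bil A n y y"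
proof (cases "\<exists>i<n. y i \<noteq> 0")
  case True
  assume "pdm n A" thus ?thesis using pdmD(3) True by (simp add: less_imp_le)
next
  case False
  hence "bil A n y y = bil A n (\<lambda>_. 0) (\<lambda>_. 0)" by (intro bil_cong) auto
  thus ?thesis by (simp add: bil_def)
qed

definition minv :: "real mat \<Rightarrow> real mat" where "minv V = the (mat_inverse V)"

lemma pdm_inverse:
  assumes p: "pdm n V"
  shows "V * minv V = 1\<^sub>m n" "minv V * V = 1\<^sub>m n" "minv V \<in> carrier_mat n n"
    "mat_inverse V = Some (minv V)"
proof -
  have V: "V \<in> carrier_mat n n" by (rule pdmD(1)[OF p])
  have "det V \<noteq> 0"
  proof
    assume "det V = 0"
    then obtain v where v: "v \<in> carrier_vec n" "v \<noteq> 0\<^sub>v n" "V *\<^sub>v v = 0\<^sub>v n"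
      using det_0_iff_vec_prod_zero_field[OF V] by blast
    have "\<exists>i<n. v $ i \<noteq> 0"
    proof (rule ccontr)
      assume "\<not> (\<exists>i<n. v $ i \<noteq> 0)"
      hence "v = 0\<^sub>v n" using v(1) by (intro eq_vecI) auto
      thus False using v(2) by simp
    qed
    hence "0 < bil V n (($) v) (($) v)" by (rule pdmD(3)[OF p])
    also have "bil V n (($) v) (($) v) = v \<bullet> (V *\<^sub>v v)" using bil_vec[OF V v(1) v(1)] by simp
    also have "\<dots> = 0" using v by simp
    finally show False by simp
  qed
  hence U: "V \<in> Units (ring_mat TYPE(real) n ())" by (rule det_non_zero_imp_unit[OF V])
  have "mat_inverse V \<noteq> None"
  proof
    assume N: "mat_inverse V = None"
    show False using mat_inverse(1)[where b = "()", OF V N] U by blast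
  qed
  then obtain B where B: "mat_inverse V = Some B" by blast
  hence "minv V = B" unfolding minv_def by simp
  thus "V * minv V = 1\<^sub>m n" "minv V * V = 1\<^sub>m n" "minv V \<in> carrier_mat n n" "mat_inverse V = Some (minv V)"
    using mat_inverse(2)[OF V B] B by auto
qed

lemma inv_unique:
  assumes p: "pdm n V" and C: "C \<in> carrier_mat n n" and VC: "V * C = 1\<^sub>m n"
  shows "minv V = C"
proof -
  have V: "V \<in> carrier_mat n n" by (rule pdmD(1)[OF p])
  have B: "minv V \<in> carrier_mat n n" by (rule pdm_inverse(3)[OF p])
  have "minv V = minv V * (V * C)" using VC B by simp
  also have "\<dots> = (minv V * V) * C" using B V C by (simp add: assoc_mult_mat)
  also have "\<dots> = C" using pdm_inverse(2)[OF p] C by simp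
  finally show ?thesis .
qed

lemma inv_sym:
  assumes p: "pdm n V" and ij: "i < n" "j < n"
  shows "minv V $$ (i,j) = minv V $$ (j,i)"
proof -
  have V: "V \<in> carrier_mat n n" by (rule pdmD(1)[OF p])
  have B: "minv V \<in> carrier_mat n n" by (rule pdm_inverse(3)[OF p])
  have VT: "transpose_mat V = V" using V pdmD(2)[OF p] by (intro eq_matI) auto
  have "transpose_mat (V * minv V) = transpose_mat (minv V) * transpose_mat V"
    by (rule transpose_mult[OF V B])
  hence BtV: "transpose_mat (minv V) * V = 1\<^sub>m n" using pdm_inverse(1)[OF p] VT by simp
  have Bt: "transpose_mat (minv V) \<in> carrier_mat n n" using B by simp
  have "transpose_mat (minv V) = transpose_mat (minv V) * (V * minv V)" using pdm_inverse(1)[OF p] Bt by simp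
  also have "\<dots> = (transpose_mat (minv V) * V) * minv V" using B V Bt by (simp add: assoc_mult_mat)
  also have "\<dots> = minv V" using BtV B by simp
  finally have "transpose_mat (minv V) = minv V" .
  hence "transpose_mat (minv V) $$ (j,i) = minv V $$ (j,i)" by simp
  thus ?thesis using ij B by simp
qed

definition mv :: "real mat \<Rightarrow> nat \<Rightarrow> (nat \<Rightarrow> real) \<Rightarrow> nat \<Rightarrow> real" where
  "mv A n y = (\<lambda>i. \<Sum>j<n. A $$ (i,j) * y j)"

lemma bil_mv: "bil A n x y = (\<Sum>i<n. x i * mv A n y i)"
  unfolding bil_def mv_def by (simp add: sum_distrib_left mult.assoc)

lemma mv_mult:
  assumes "A \<in> carrier_mat n n" "B \<in> carrier_mat n n" "i < n"
  shows "mv A n (mv B n y) i = mv (A * B) n y i"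
proof -
  have "mv A n (mv B n y) i = (\<Sum>k<n. \<Sum>j<n. A $$ (i,k) * B $$ (k,j) * y j)"
    unfolding mv_def by (simp add: sum_distrib_left mult.assoc)
  also have "\<dots> = (\<Sum>j<n. \<Sum>k<n. A $$ (i,k) * B $$ (k,j) * y j)" by (rule sum.swap)
  also have "\<dots> = mv (A * B) n y i"
    unfolding mv_def
  proof (intro sum.cong refl)
    fix j assume "j \<in> {..<n}"
    thus "(\<Sum>k<n. A $$ (i,k) * B $$ (k,j) * y j) = (A * B) $$ (i,j) * y j"
      using mult_entry[OF assms(1,2) assms(3)] by (simp add: sum_distrib_right)
  qed
  finally show ?thesis .
qed

lemma mv_one: assumes i: "i < n" shows "mv (1\<^sub>m n) n y i = y i"
proof -
  have "mv (1\<^sub>m n) n y i = (\<Sum>j<n. (if j = i then 1 else 0) * y j)"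
    unfolding mv_def using i by (intro sum.cong refl) auto
  also have "\<dots> = y i" by (rule sum_delta_l[OF i])
  finally show ?thesis .
qed

lemma inv_pdm:
  assumes p: "pdm n V"
  shows "pdm n (minv V)"
proof -
  have V: "V \<in> carrier_mat n n" by (rule pdmD(1)[OF p])
  have B: "minv V \<in> carrier_mat n n" by (rule pdm_inverse(3)[OF p])
  show ?thesis unfolding pdm_def
  proof (intro conjI allI impI)
    show "minv V \<in> carrier_mat n n" by (rule B)
    fix i j assume "i < n" "j < n" thus "minv V $$ (i,j) = minv V $$ (j,i)" by (rule inv_sym[OF p])
  next
    fix y :: "nat \<Rightarrow> real" assume ex: "\<exists>i<n. y i \<noteq> 0"
    define w where "w = mv (minv V) n y"
    have Vw: "mv V n w i = y i" if "i < n" for i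
      unfolding w_def using mv_mult[OF V B that] pdm_inverse(1)[OF p] mv_one[OF that] by simp
    have "\<exists>i<n. w i \<noteq> 0"
    proof (rule ccontr)
      assume "\<not> (\<exists>i<n. w i \<noteq> 0)"
      hence "mv V n w i = 0" if "i < n" for i unfolding mv_def by simp
      thus False using Vw ex by force
    qed
    hence "0 < bil V n w w" by (rule pdmD(3)[OF p])
    also have "bil V n w w = (\<Sum>i<n. y i * w i)"
    proof -
      have "bil V n w w = (\<Sum>i<n. w i * mv V n w i)" by (rule bil_mv)
      also have "\<dots> = (\<Sum>i<n. y i * w i)" using Vw by (intro sum.cong refl) simp
      finally show "bil V n w w = (\<Sum>i<n. y i * w i)" .
    qed
    also have "\<dots> = bil (minv V) n y y" unfolding bil_mv w_def by simp
    finally show "0 < bil (minv V) n y y" .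
  qed
qed

definition outer :: "nat \<Rightarrow> (nat \<Rightarrow> real) \<Rightarrow> real mat" where
  "outer n y = mat n n (\<lambda>(p,q). y p * y q)"

lemma det_outer:
  assumes p: "pdm n V"
  shows "det (V + outer n y) = det V * (1 + bil (minv V) n y y)"
proof -
  have V: "V \<in> carrier_mat n n" by (rule pdmD(1)[OF p])
  have B: "minv V \<in> carrier_mat n n" by (rule pdm_inverse(3)[OF p])
  define u where "u = mv (minv V) n y"
  define M where "M = mat (Suc n) (Suc n) (\<lambda>(i,j). if i = 0 then (if j = 0 then 1 else - y (j-1))
      else if j = 0 then y (i-1) else V $$ (i-1,j-1))"
  define E where "E = mat (Suc n) (Suc n) (\<lambda>(i,j). (if i = j then 1 else 0) + (if j = 0 \<and> i \<noteq> 0 then - u (i-1) else 0))"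
  have Mc: "M \<in> carrier_mat (Suc n) (Suc n)" unfolding M_def by simp
  have Ec: "E \<in> carrier_mat (Suc n) (Suc n)" unfolding E_def by simp
  have dE: "det E = 1"
  proof -
    have "det E = prod_list (diag_mat E)"
      by (rule det_lower_triangular[OF _ Ec]) (auto simp: E_def)
    also have "diag_mat E = map (\<lambda>_. 1) [0..<Suc n]"
      unfolding diag_mat_def E_def by (auto simp del: upt_Suc)
    finally show ?thesis by (simp add: map_replicate_const del: upt_Suc)
  qed
  have "det M = M $$ (0,0) * det (mat n n (\<lambda>(i,j). M $$ (Suc i, Suc j) - M $$ (Suc i, 0) * M $$ (0, Suc j) / M $$ (0,0)))"
    by (rule det_schur[OF Mc]) (simp add: M_def)
  also have "mat n n (\<lambda>(i,j). M $$ (Suc i, Suc j) - M $$ (Suc i, 0) * M $$ (0, Suc j) / M $$ (0,0)) = V + outer n y"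
    using V by (intro eq_matI) (auto simp: M_def outer_def)
  finally have dM1: "det M = det (V + outer n y)" by (simp add: M_def)
  have ME: "(M * E) $$ (i,j) = M $$ (i,j) + (if j = 0 then - (\<Sum>k<n. M $$ (i, Suc k) * u k) else 0)"
    if ij: "i < Suc n" "j < Suc n" for i j
  proof -
    have "(M * E) $$ (i,j) = (\<Sum>k<Suc n. M $$ (i,k) * E $$ (k,j))" by (rule mult_entry[OF Mc Ec ij])
    also have "\<dots> = (\<Sum>k<Suc n. M $$ (i,k) * (if k = j then 1 else 0)) + (\<Sum>k<Suc n. M $$ (i,k) * (if j = 0 \<and> k \<noteq> 0 then - u (k-1) else 0))"
      unfolding sum.distrib[symmetric] using ij by (intro sum.cong refl) (auto simp: E_def distrib_left)
    also have "(\<Sum>k<Suc n. M $$ (i,k) * (if k = j then 1 else 0)) = M $$ (i,j)" by (rule sum_delta_r[OF ij(2)])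
    also have "(\<Sum>k<Suc n. M $$ (i,k) * (if j = 0 \<and> k \<noteq> 0 then - u (k-1) else 0)) = (if j = 0 then - (\<Sum>k<n. M $$ (i, Suc k) * u k) else 0)"
      unfolding sum.lessThan_Suc_shift by (simp add: sum_negf)
    finally show ?thesis .
  qed
  have MEc: "M * E \<in> carrier_mat (Suc n) (Suc n)" using Mc Ec by simp
  have VB: "mv V n u i = y i" if "i < n" for i
    unfolding u_def using mv_mult[OF V B that] pdm_inverse(1)[OF p] mv_one[OF that] by simp
  have "det (M * E) = (M * E) $$ (0,0) * det (mat n n (\<lambda>(i,j). (M * E) $$ (Suc i, Suc j)))"
  proof (rule det_col0[OF MEc])
    fix i assume i: "0 < i" "i < Suc n"
    then obtain i' where i': "i = Suc i'" "i' < n" by (cases i) auto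
    have "(M * E) $$ (Suc i',0) = M $$ (Suc i',0) - (\<Sum>k<n. M $$ (Suc i', Suc k) * u k)"
      using ME[of "Suc i'" 0] i' by simp
    also have "\<dots> = y i' - mv V n u i'" using i' by (simp add: M_def mv_def)
    finally have "(M * E) $$ (i,0) = y i' - mv V n u i'" using i' by simp
    thus "(M * E) $$ (i,0) = 0" using VB[OF i'(2)] by simp
  qed
  also have "(M * E) $$ (0,0) = 1 + bil (minv V) n y y"
    unfolding ME[of 0 0, simplified] bil_mv u_def[symmetric] by (simp add: M_def sum_negf)
  also have "mat n n (\<lambda>(i,j). (M * E) $$ (Suc i, Suc j)) = V"
  proof -
    have MEs: "(M * E) $$ (Suc i, Suc j) = V $$ (i,j)" if "i < n" "j < n" for i j
    proof -
      have "(M * E) $$ (Suc i, Suc j) = M $$ (Suc i, Suc j)" using ME[of "Suc i" "Suc j"] that by simp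
      also have "\<dots> = V $$ (i,j)" using that by (simp add: M_def)
      finally show ?thesis .
    qed
    show ?thesis using V by (intro eq_matI) (auto simp: MEs)
  qed
  finally have "det (M * E) = (1 + bil (minv V) n y y) * det V" .
  moreover have "det (M * E) = det M" using det_mult[OF Mc Ec] dE by simp
  ultimately show ?thesis using dM1 by simp
qed

lemma bil_add:
  assumes "A \<in> carrier_mat n n" "B \<in> carrier_mat n n"
  shows "bil (A + B) n x y = bil A n x y + bil B n x y"
  unfolding bil_def sum.distrib[symmetric] using assms by (intro sum.cong refl) (simp add: algebra_simps)

lemma bil_outer: "bil (outer n y) n z z = (\<Sum>p<n. z p * y p)^2"
proof -
  have "bil (outer n y) n z z = (\<Sum>i<n. \<Sum>j<n. (z i * y i) * (z j * y j))"
    unfolding bil_def outer_def by (intro sum.cong refl) (simp add: algebra_simps)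
  also have "\<dots> = (\<Sum>p<n. z p * y p)^2" by (simp add: power2_eq_square sum_product)
  finally show ?thesis .
qed

lemma pdm_add_outer:
  assumes p: "pdm n V" shows "pdm n (V + outer n y)"
proof -
  have V: "V \<in> carrier_mat n n" by (rule pdmD(1)[OF p])
  have O: "outer n y \<in> carrier_mat n n" unfolding outer_def by simp
  show ?thesis unfolding pdm_def
  proof (intro conjI allI impI)
    show "V + outer n y \<in> carrier_mat n n" using V O by simp
    fix i j assume ij: "i < n" "j < n"
    have "V $$ (i,j) = V $$ (j,i)" by (rule pdmD(2)[OF p ij])
    thus "(V + outer n y) $$ (i,j) = (V + outer n y) $$ (j,i)" using ij V O by (simp add: outer_def)
  next
    fix z :: "nat \<Rightarrow> real" assume "\<exists>i<n. z i \<noteq> 0"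
    hence "0 < bil V n z z" by (rule pdmD(3)[OF p])
    thus "0 < bil (V + outer n y) n z z" unfolding bil_add[OF V O] bil_outer
      by (simp add: add_pos_nonneg)
  qed
qed

lemma sum_alg1:
  fixes a b d e :: "nat \<Rightarrow> real"
  shows "(\<Sum>k<n. (a k + c * b k) * (d k - e k * g)) =
    (\<Sum>k<n. a k * d k) - (\<Sum>k<n. a k * e k) * g + c * (\<Sum>k<n. b k * d k) - c * (\<Sum>k<n. b k * e k) * g"
  by (simp add: algebra_simps sum.distrib sum_subtractf sum_distrib_left sum_distrib_right)

lemma alg_aux: "1 + (b::real) \<noteq> 0 \<Longrightarrow> p * (q / (1 + b)) + p * b * (q / (1 + b)) = p * q"
proof -
  assume nz: "1 + b \<noteq> 0"
  have g: "\<And>w::real. p * w + p * b * w = p * (w * (1 + b))" by (simp add: algebra_simps)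
  have w: "q / (1 + b) * (1 + b) = q" using nz by simp
  show ?thesis using g[of "q / (1 + b)"] unfolding w .
qed

lemma minv_outer:
  fixes y :: "nat \<Rightarrow> real"
  assumes p: "pdm n V"
  defines "u \<equiv> mv (minv V) n y" and "\<beta> \<equiv> bil (minv V) n y y"
  shows "minv (V + outer n y) = mat n n (\<lambda>(i,j). minv V $$ (i,j) - u i * u j / (1 + \<beta>))"
proof (rule inv_unique[OF pdm_add_outer[OF p]])
  have V: "V \<in> carrier_mat n n" by (rule pdmD(1)[OF p])
  have B: "minv V \<in> carrier_mat n n" by (rule pdm_inverse(3)[OF p])
  have O: "outer n y \<in> carrier_mat n n" unfolding outer_def by simp
  have b0: "0 \<le> \<beta>" unfolding \<beta>_def by (rule pdm_nonneg[OF inv_pdm[OF p]])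
  define C where "C = mat n n (\<lambda>(i,j). minv V $$ (i,j) - u i * u j / (1 + \<beta>))"
  show "C \<in> carrier_mat n n" unfolding C_def by simp
  show "(V + outer n y) * C = 1\<^sub>m n"
  proof (rule eq_matI)
    show "dim_row ((V + outer n y) * C) = dim_row (1\<^sub>m n)" using V by (simp add: outer_def)
    show "dim_col ((V + outer n y) * C) = dim_col (1\<^sub>m n)" unfolding C_def by simp
    fix i j assume "i < dim_row (1\<^sub>m n)" "j < dim_col (1\<^sub>m n)"
    hence ij: "i < n" "j < n" by auto
    have VOc: "V + outer n y \<in> carrier_mat n n" using V O by simp
    have Cc: "C \<in> carrier_mat n n" unfolding C_def by simp
    have "((V + outer n y) * C) $$ (i,j) = (\<Sum>k<n. (V $$ (i,k) + y i * y k) * (minv V $$ (k,j) - u k * (u j / (1 + \<beta>))))"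
      unfolding mult_entry[OF VOc Cc ij] using ij V by (intro sum.cong refl) (simp add: C_def outer_def)
    also have "\<dots> = (\<Sum>k<n. V $$ (i,k) * minv V $$ (k,j)) - (\<Sum>k<n. V $$ (i,k) * u k) * (u j / (1 + \<beta>))
       + y i * (\<Sum>k<n. y k * minv V $$ (k,j)) - y i * (\<Sum>k<n. y k * u k) * (u j / (1 + \<beta>))"
      by (rule sum_alg1)
    also have "(\<Sum>k<n. V $$ (i,k) * minv V $$ (k,j)) = (if i = j then 1 else 0)"
      using mult_entry[OF V B ij] pdm_inverse(1)[OF p] ij by simp
    also have "(\<Sum>k<n. V $$ (i,k) * u k) = y i"
      using mv_mult[OF V B ij(1), of y] pdm_inverse(1)[OF p] mv_one[OF ij(1)] unfolding u_def mv_def by simp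
    also have "(\<Sum>k<n. y k * minv V $$ (k,j)) = u j"
      unfolding u_def mv_def using inv_sym[OF p _ ij(2)] by (intro sum.cong refl) (simp add: mult.commute)
    also have "(\<Sum>k<n. y k * u k) = \<beta>" unfolding \<beta>_def bil_mv u_def ..
    also have "(if i = j then 1 else 0) - y i * (u j / (1 + \<beta>)) + y i * u j - y i * \<beta> * (u j / (1 + \<beta>)) = (if i = j then 1 else (0::real))"
    proof -
      have "y i * (u j / (1 + \<beta>)) + y i * \<beta> * (u j / (1 + \<beta>)) = y i * u j"
      proof -
        have nz: "1 + \<beta> \<noteq> 0" using b0 by simp
        show ?thesis using alg_aux[OF nz] .
      qed
      thus ?thesis by linarith
    qed
    finally show "((V + outer n y) * C) $$ (i,j) = 1\<^sub>m n $$ (i,j)" using ij by simp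
  qed
qed

lemma bil_minv_outer:
  assumes p: "pdm n V"
  shows "bil (minv (V + outer n y)) n z z = bil (minv V) n z z - (bil (minv V) n z y)^2 / (1 + bil (minv V) n y y)"
proof -
  define u where "u = mv (minv V) n y"
  define s where "s = 1 / (1 + bil (minv V) n y y)"
  have "bil (minv (V + outer n y)) n z z = (\<Sum>i<n. \<Sum>j<n. z i * minv V $$ (i,j) * z j - (z i * u i) * (z j * u j) * s)"
    unfolding minv_outer[OF p] bil_def u_def[symmetric] s_def by (intro sum.cong refl) (simp add: algebra_simps)
  also have "\<dots> = bil (minv V) n z z - (\<Sum>i<n. z i * u i) * (\<Sum>j<n. z j * u j) * s"
  proof -
    have "(\<Sum>i<n. z i * u i) * (\<Sum>j<n. z j * u j) * s = (\<Sum>i<n. \<Sum>j<n. (z i * u i) * (z j * u j) * s)"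
      unfolding sum_product by (simp add: sum_distrib_right)
    thus ?thesis unfolding bil_def sum_subtractf by simp
  qed
  also have "(\<Sum>i<n. z i * u i) = bil (minv V) n z y" unfolding bil_mv u_def ..
  finally show ?thesis by (simp add: s_def power2_eq_square)
qed

lemma bil_expand:
  "bil A n (\<lambda>i. x i - t * y i) (\<lambda>i. x i - t * y i) = bil A n x x - t * bil A n x y - t * bil A n y x + t^2 * bil A n y y"
  unfolding bil_def by (simp add: algebra_simps sum.distrib sum_subtractf sum_distrib_left power2_eq_square)

lemma bil_cs:
  assumes p: "pdm n B"
  shows "(bil B n x y)^2 \<le> bil B n x x * bil B n y y"
proof (cases "\<exists>i<n. y i \<noteq> 0")
  case False
  hence "bil B n x y = bil B n x (\<lambda>_. 0)" by (intro bil_cong) auto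
  hence "bil B n x y = 0" by (simp add: bil_def)
  thus ?thesis using pdm_nonneg[OF p, of x] pdm_nonneg[OF p, of y] by simp
next
  case True
  define b where "b = bil B n y y"
  define c where "c = bil B n x y"
  have b: "0 < b" unfolding b_def by (rule pdmD(3)[OF p True])
  have yx: "bil B n y x = c" unfolding c_def by (rule bil_sym[OF pdmD(2)[OF p]])
  have "0 \<le> bil B n (\<lambda>i. x i - (c/b) * y i) (\<lambda>i. x i - (c/b) * y i)" by (rule pdm_nonneg[OF p])
  also have "\<dots> = bil B n x x - c * c / b"
    unfolding bil_expand yx c_def[symmetric] b_def[symmetric] using b by (simp add: field_simps power2_eq_square)
  finally have "c * c / b \<le> bil B n x x" by simp
  hence "c * c \<le> bil B n x x * b" using b by (simp add: field_simps)
  thus ?thesis unfolding c_def b_def by (simp add: power2_eq_square)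
qed

lemma bil_minv_outer_ge:
  assumes p: "pdm n V"
  shows "bil (minv V) n z z / (1 + bil (minv V) n y y) \<le> bil (minv (V + outer n y)) n z z"
proof -
  define b where "b = bil (minv V) n y y"
  define q where "q = bil (minv V) n z z"
  have b0: "0 \<le> b" unfolding b_def by (rule pdm_nonneg[OF inv_pdm[OF p]])
  have q0: "0 \<le> q" unfolding q_def by (rule pdm_nonneg[OF inv_pdm[OF p]])
  have cs: "(bil (minv V) n z y)^2 \<le> q * b" unfolding q_def b_def by (rule bil_cs[OF inv_pdm[OF p]])
  have "(bil (minv V) n z y)^2 / (1 + b) \<le> q * b / (1 + b)"
    using cs b0 by (intro divide_right_mono) auto
  hence "q - q * b / (1 + b) \<le> bil (minv (V + outer n y)) n z z"
    unfolding bil_minv_outer[OF p] q_def[symmetric] b_def[symmetric] by linarith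
  moreover have "q - q * b / (1 + b) = q / (1 + b)"
  proof -
    have w: "q / (1 + b) * (1 + b) = q" using b0 by simp
    have w2: "q * b / (1 + b) = q / (1 + b) * b" by simp
    have g: "\<And>w::real. w * (1 + b) - w * b = w" by (simp add: algebra_simps)
    show ?thesis using g[of "q / (1 + b)"] unfolding w w2 .
  qed
  ultimately show ?thesis unfolding q_def b_def by simp
qed

lemma batch:
  assumes "finite F"
  shows "pdm n V \<Longrightarrow> 0 < det V \<Longrightarrow>
    det V * (1 + (\<Sum>j\<in>F. bil (minv V) n (Y j) (Y j))) \<le> det (V + mat n n (\<lambda>(p,q). \<Sum>j\<in>F. Y j p * Y j q))"
  using assms
proof (induction F arbitrary: V rule: finite_induct)
  case empty
  have V: "V \<in> carrier_mat n n" by (rule pdmD(1)[OF empty(1)])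
  have e: "V + mat n n (\<lambda>(p,q). \<Sum>j\<in>{}. Y j p * Y j q) = V" using V by (intro eq_matI) auto
  show ?case unfolding e by simp
next
  case (insert a F)
  have p: "pdm n V" by (rule insert.prems(1))
  have V: "V \<in> carrier_mat n n" by (rule pdmD(1)[OF p])
  define V' where "V' = V + outer n (Y a)"
  define \<beta> where "\<beta> = bil (minv V) n (Y a) (Y a)"
  have b0: "0 \<le> \<beta>" unfolding \<beta>_def by (rule pdm_nonneg[OF inv_pdm[OF p]])
  have pV': "pdm n V'" unfolding V'_def by (rule pdm_add_outer[OF p])
  have dV': "det V' = det V * (1 + \<beta>)" unfolding V'_def \<beta>_def by (rule det_outer[OF p])
  have dV'pos: "0 < det V'" unfolding dV' using insert.prems(2) b0 by simp
  have IH: "det V' * (1 + (\<Sum>j\<in>F. bil (minv V') n (Y j) (Y j))) \<le> det (V' + mat n n (\<lambda>(p,q). \<Sum>j\<in>F. Y j p * Y j q))"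
    by (rule insert.IH[OF pV' dV'pos])
  have eq: "V + mat n n (\<lambda>(p,q). \<Sum>j\<in>insert a F. Y j p * Y j q) = V' + mat n n (\<lambda>(p,q). \<Sum>j\<in>F. Y j p * Y j q)"
    unfolding V'_def using V insert.hyps by (intro eq_matI) (auto simp: outer_def)
  have ge: "(\<Sum>j\<in>F. bil (minv V) n (Y j) (Y j)) / (1 + \<beta>) \<le> (\<Sum>j\<in>F. bil (minv V') n (Y j) (Y j))"
    unfolding sum_divide_distrib V'_def \<beta>_def by (intro sum_mono bil_minv_outer_ge[OF p])
  have "det V * (1 + (\<Sum>j\<in>insert a F. bil (minv V) n (Y j) (Y j)))
      = det V * (1 + \<beta> + (\<Sum>j\<in>F. bil (minv V) n (Y j) (Y j)))"
    using insert.hyps by (simp add: \<beta>_def add.assoc)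
  also have "\<dots> = det V' * (1 + (\<Sum>j\<in>F. bil (minv V) n (Y j) (Y j)) / (1 + \<beta>))"
    unfolding dV' using b0 by (simp add: field_simps)
  also have "\<dots> \<le> det V' * (1 + (\<Sum>j\<in>F. bil (minv V') n (Y j) (Y j)))"
    using ge dV'pos by (intro mult_left_mono) auto
  also have "\<dots> \<le> det (V + mat n n (\<lambda>(p,q). \<Sum>j\<in>insert a F. Y j p * Y j q))"
    unfolding eq by (rule IH)
  finally show ?case .
qed

lemma pdm_add_sum:
  assumes "finite F"
  shows "pdm n V \<Longrightarrow> pdm n (V + mat n n (\<lambda>(p,q). \<Sum>j\<in>F. Y j p * Y j q))"
  using assms
proof (induction F arbitrary: V rule: finite_induct)
  case empty
  have V: "V \<in> carrier_mat n n" by (rule pdmD(1)[OF empty(1)])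
  have e: "V + mat n n (\<lambda>(p,q). \<Sum>j\<in>{}. Y j p * Y j q) = V" using V by (intro eq_matI) auto
  show ?case unfolding e by (rule empty(1))
next
  case (insert a F)
  have V: "V \<in> carrier_mat n n" by (rule pdmD(1)[OF insert.prems(1)])
  have eq: "V + mat n n (\<lambda>(p,q). \<Sum>j\<in>insert a F. Y j p * Y j q) = (V + outer n (Y a)) + mat n n (\<lambda>(p,q). \<Sum>j\<in>F. Y j p * Y j q)"
    using V insert.hyps by (intro eq_matI) (auto simp: outer_def)
  show ?case unfolding eq by (rule insert.IH[OF pdm_add_outer[OF insert.prems(1)]])
qed

lemma pdm_scalar_one:
  assumes lam: "0 < (lam::real)" shows "pdm n (lam \<cdot>\<^sub>m 1\<^sub>m n)"
  unfolding pdm_def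
proof (intro conjI allI impI)
  show "lam \<cdot>\<^sub>m 1\<^sub>m n \<in> carrier_mat n n" by simp
  fix i j assume "i < n" "j < n" thus "(lam \<cdot>\<^sub>m 1\<^sub>m n) $$ (i,j) = (lam \<cdot>\<^sub>m 1\<^sub>m n) $$ (j,i)" by auto
next
  fix z :: "nat \<Rightarrow> real" assume "\<exists>i<n. z i \<noteq> 0"
  then obtain i0 where i0: "i0 < n" "z i0 \<noteq> 0" by blast
  have "bil (lam \<cdot>\<^sub>m 1\<^sub>m n) n z z = (\<Sum>i<n. lam * (z i * z i))"
    unfolding bil_def
  proof (rule sum.cong[OF refl])
    fix i assume i: "i \<in> {..<n}"
    have "(\<Sum>j<n. z i * (lam \<cdot>\<^sub>m 1\<^sub>m n) $$ (i, j) * z j) = (\<Sum>j<n. (if j = i then 1 else 0) * (lam * z i * z j))"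
      using i by (intro sum.cong refl) auto
    also have "\<dots> = lam * z i * z i" using i by (subst sum_delta_l) auto
    finally show "(\<Sum>j<n. z i * (lam \<cdot>\<^sub>m 1\<^sub>m n) $$ (i, j) * z j) = lam * (z i * z i)" by simp
  qed
  also have "\<dots> > 0"
  proof (rule sum_pos2[of _ i0])
    have "0 < z i0 * z i0" using i0(2) by (metis not_real_square_gt_zero)
    thus "0 < lam * (z i0 * z i0)" using lam by simp
  qed (use i0 lam in auto)
  finally show "0 < bil (lam \<cdot>\<^sub>m 1\<^sub>m n) n z z" .
qed

lemma cs_sum:
  fixes f :: "'a \<Rightarrow> real"
  assumes "finite A"
  shows "(\<Sum>i\<in>A. f i)^2 \<le> real (card A) * (\<Sum>i\<in>A. (f i)^2)"
proof (cases "card A = 0")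
  case True thus ?thesis using assms by simp
next
  case False
  define n where "n = real (card A)"
  define S where "S = (\<Sum>i\<in>A. f i)"
  define Q where "Q = (\<Sum>i\<in>A. (f i)^2)"
  have n: "0 < n" using False unfolding n_def by simp
  have "0 \<le> (\<Sum>i\<in>A. (f i - S / n)^2)" by (intro sum_nonneg) auto
  also have "\<dots> = Q - 2 * (S / n) * S + n * (S / n)^2"
  proof -
    have e: "(\<Sum>i\<in>A. (f i - m)^2) = (\<Sum>i\<in>A. (f i)^2) - 2 * m * (\<Sum>i\<in>A. f i) + real (card A) * m^2" for m
    proof -
      have "(\<Sum>i\<in>A. (f i - m)^2) = (\<Sum>i\<in>A. ((f i)^2 + m^2) - 2 * m * f i)"
        by (intro sum.cong refl) (simp add: power2_diff algebra_simps)
      also have "\<dots> = (\<Sum>i\<in>A. (f i)^2) + (\<Sum>i\<in>A. m^2) - (\<Sum>i\<in>A. 2 * m * f i)"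
        by (simp only: sum_subtractf sum.distrib)
      also have "(\<Sum>i\<in>A. 2 * m * f i) = 2 * m * (\<Sum>i\<in>A. f i)" by (simp add: sum_distrib_left)
      finally show ?thesis by simp
    qed
    show ?thesis unfolding e Q_def[symmetric] S_def[symmetric] n_def[symmetric] ..
  qed
  also have "\<dots> = Q - S^2 / n" using n by (simp add: field_simps power2_eq_square)
  finally have "S^2 / n \<le> Q" by simp
  hence "S^2 \<le> n * Q" using n by (simp add: field_simps)
  thus ?thesis unfolding n_def S_def Q_def .
qed

 lemma ln_lower: assumes "0 \<le> (x::real)" "x \<le> 1" shows "x \<le> 2 * ln (1 + x)"
proof -
  have p: "0 < 1 + x" using assms by simp
  have "ln (1 / (1 + x)) \<le> 1 / (1 + x) - 1" by (rule ln_le_minus_one) (use p in simp)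
  hence a0: "1 - 1 / (1 + x) \<le> ln (1 + x)" using p by (simp add: ln_div)
  have "1 - 1 / (1 + x) = x / (1 + x)" using p by (simp add: field_simps)
  hence a: "x / (1 + x) \<le> ln (1 + x)" using a0 by simp
  have b: "x / 2 \<le> x / (1 + x)" using assms p by (intro divide_left_mono) auto
  have "x / 2 \<le> ln (1 + x)" using a b by (rule order_trans[rotated])
  thus ?thesis by simp
qed

lemma gram_carrier: "gram lam d k x t \<in> carrier_mat d d"
  unfolding gram_def by simp

lemma gram_0: "gram lam d k x 0 = lam \<cdot>\<^sub>m 1\<^sub>m d"
  unfolding gram_def by (intro eq_matI) auto

lemma gram_Suc: "gram lam d k x (Suc t) = gram lam d k x t + mat d d (\<lambda>(p,q). \<Sum>i\<in>{1..k}. x (Suc t) i $ p * x (Suc t) i $ q)"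
  unfolding gram_def by (intro eq_matI) auto

lemma pdm_gram: "0 < lam \<Longrightarrow> pdm d (gram lam d k x t)"
proof (induction t)
  case 0 thus ?case unfolding gram_0 by (rule pdm_scalar_one)
next
  case (Suc t)
  show ?case unfolding gram_Suc
    using pdm_add_sum[of "{1..k}" d "gram lam d k x t" "\<lambda>i a. x (Suc t) i $ a"] Suc by simp
qed

lemma det_gram_lower:
  assumes lam: "0 < lam"
  shows "lam ^ d * (\<Prod>t\<in>{1..T}. 1 + (\<Sum>i\<in>{1..k}. bil (minv (gram lam d k x (t - 1))) d (\<lambda>a. x t i $ a) (\<lambda>a. x t i $ a)))
     \<le> det (gram lam d k x T)"
proof (induction T)
  case 0
  show ?case unfolding gram_0 by simp
next
  case (Suc T)
  define f where "f = (\<lambda>t. 1 + (\<Sum>i\<in>{1..k}. bil (minv (gram lam d k x (t - 1))) d (\<lambda>a. x t i $ a) (\<lambda>a. x t i $ a)))"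
  have f1: "1 \<le> f t" for t
    unfolding f_def using pdm_nonneg[OF inv_pdm[OF pdm_gram[OF lam]]] by (simp add: sum_nonneg)
  have IH: "lam ^ d * prod f {1..T} \<le> det (gram lam d k x T)" using Suc unfolding f_def by simp
  have fpos: "0 < f t" for t using f1[of t] by linarith
  have pp: "0 < lam ^ d * prod f {1..T}" using lam fpos by (intro mult_pos_pos prod_pos) auto
  have dpos: "0 < det (gram lam d k x T)" using pp IH by simp
  have "det (gram lam d k x T) * f (Suc T) \<le> det (gram lam d k x (Suc T))"
    unfolding gram_Suc f_def
    using batch[of "{1..k}" d "gram lam d k x T" "\<lambda>i a. x (Suc T) i $ a"] pdm_gram[OF lam] dpos by simp
  moreover have "lam ^ d * prod f {1..Suc T} = (lam ^ d * prod f {1..T}) * f (Suc T)" by simp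
  moreover have "(lam ^ d * prod f {1..T}) * f (Suc T) \<le> det (gram lam d k x T) * f (Suc T)"
    using IH f1[of "Suc T"] by (intro mult_right_mono) auto
  ultimately show ?case unfolding f_def[symmetric] by linarith
qed

lemma norm_sq_le:
  assumes "y \<in> carrier_vec d" "sqrt (y \<bullet> y) \<le> L"
  shows "(\<Sum>a<d. (y $ a)^2) \<le> L^2"
proof -
  have e: "y \<bullet> y = (\<Sum>a<d. (y $ a)^2)" using assms(1) by (simp add: scalar_prod_def atLeast0LessThan power2_eq_square)
  have nn: "0 \<le> y \<bullet> y" unfolding e by (simp add: sum_nonneg)
  have "y \<bullet> y = (sqrt (y \<bullet> y))^2" using nn by simp
  also have "\<dots> \<le> L^2" using assms(2) nn by (intro power_mono) auto
  finally show ?thesis unfolding e .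
qed

lemma ln_sum_le:
  fixes D :: "nat \<Rightarrow> real"
  assumes d: "0 < d" and D: "\<And>a. a < d \<Longrightarrow> 0 < D a"
  shows "(\<Sum>a<d. ln (D a)) \<le> real d * ln ((\<Sum>a<d. D a) / real d)"
proof -
  define c where "c = (\<Sum>a<d. D a) / real d"
  have Sp: "0 < (\<Sum>a<d. D a)" using d D by (intro sum_pos) auto
  have c: "0 < c" unfolding c_def using Sp d by simp
  have each: "ln (D a) \<le> ln c + (D a / c - 1)" if "a < d" for a
  proof -
    have "ln (D a / c) \<le> D a / c - 1" using D[OF that] c by (intro ln_le_minus_one) simp
    thus ?thesis using D[OF that] c by (simp add: ln_div)
  qed
  have "(\<Sum>a<d. ln (D a)) \<le> (\<Sum>a<d. ln c + (D a / c - 1))" using each by (intro sum_mono) auto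
  also have "\<dots> = real d * ln c + ((\<Sum>a<d. D a) / c - real d)"
    by (simp add: sum.distrib sum_subtractf sum_divide_distrib)
  also have "(\<Sum>a<d. D a) / c = real d" unfolding c_def using Sp d by simp
  finally show ?thesis unfolding c_def by simp
qed

lemma key_log:
  fixes lam L :: real and d k T :: nat and x :: "nat \<Rightarrow> nat \<Rightarrow> real vec"
  assumes lam: "0 < lam" and d: "0 < d"
    and hx: "\<forall>t\<in>{1..T}. \<forall>i\<in>{1..k}. x t i \<in> carrier_vec d \<and> sqrt (x t i \<bullet> x t i) \<le> L"
  shows "(\<Sum>t\<in>{1..T}. ln (1 + (\<Sum>i\<in>{1..k}. bil (minv (gram lam d k x (t - 1))) d (\<lambda>a. x t i $ a) (\<lambda>a. x t i $ a))))
     \<le> real d * ln (1 + L^2 * real k * real T / (real d * lam))"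
proof -
  define V where "V = gram lam d k x T"
  define f where "f = (\<lambda>t. 1 + (\<Sum>i\<in>{1..k}. bil (minv (gram lam d k x (t - 1))) d (\<lambda>a. x t i $ a) (\<lambda>a. x t i $ a)))"
  have f1: "1 \<le> f t" for t
    unfolding f_def using pdm_nonneg[OF inv_pdm[OF pdm_gram[OF lam]]] by (simp add: sum_nonneg)
  have fpos: "0 < f t" for t using f1[of t] by linarith
  have pV: "pdm d V" unfolding V_def by (rule pdm_gram[OF lam])
  define D where "D = (\<lambda>a. V $$ (a,a))"
  have Dpos: "0 < D a" if "a < d" for a unfolding D_def by (rule pdm_diag[OF pV that])
  have Dval: "D a = lam + (\<Sum>t\<in>{1..T}. \<Sum>i\<in>{1..k}. (x t i $ a)^2)" if "a < d" for a
    unfolding D_def V_def gram_def using that by (simp add: power2_eq_square)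
  have lower: "lam ^ d * prod f {1..T} \<le> det V" unfolding V_def f_def by (rule det_gram_lower[OF lam])
  have upper: "det V \<le> (\<Prod>a<d. D a)" unfolding D_def by (rule hadamard[OF pV])
  have lp: "0 < lam ^ d * prod f {1..T}" using lam fpos by (intro mult_pos_pos prod_pos) auto
  have "ln (lam ^ d * prod f {1..T}) \<le> ln (\<Prod>a<d. D a)"
    using lower upper lp by (subst ln_le_cancel_iff) auto
  moreover have "ln (lam ^ d * prod f {1..T}) = real d * ln lam + (\<Sum>t\<in>{1..T}. ln (f t))"
    using lam fpos by (simp add: ln_mult ln_realpow ln_prod prod_pos less_imp_neq[symmetric])
  moreover have "ln (\<Prod>a<d. D a) = (\<Sum>a<d. ln (D a))"
  proof (rule ln_prod)
    fix a assume "a \<in> {..<d}" thus "D a \<noteq> 0" using Dpos[of a] by simp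
  qed simp
  ultimately have A: "real d * ln lam + (\<Sum>t\<in>{1..T}. ln (f t)) \<le> (\<Sum>a<d. ln (D a))" by simp
  have B: "(\<Sum>a<d. ln (D a)) \<le> real d * ln ((\<Sum>a<d. D a) / real d)" by (rule ln_sum_le[OF d Dpos])
  have tr: "(\<Sum>a<d. D a) \<le> real d * lam + real T * real k * L^2"
  proof -
    have "(\<Sum>a<d. D a) = real d * lam + (\<Sum>a<d. \<Sum>t\<in>{1..T}. \<Sum>i\<in>{1..k}. (x t i $ a)^2)"
      using Dval by (simp add: sum.distrib)
    also have "(\<Sum>a<d. \<Sum>t\<in>{1..T}. \<Sum>i\<in>{1..k}. (x t i $ a)^2) = (\<Sum>t\<in>{1..T}. \<Sum>i\<in>{1..k}. \<Sum>a<d. (x t i $ a)^2)"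
      by (simp add: sum.swap[of _ "{..<d}"])
    also have "\<dots> \<le> (\<Sum>t\<in>{1..T}. \<Sum>i\<in>{1..k}. L^2)"
      using hx norm_sq_le by (intro sum_mono) auto
    also have "\<dots> = real T * real k * L^2" by simp
    finally show ?thesis by simp
  qed
  have c_le: "(\<Sum>a<d. D a) / real d \<le> lam * (1 + L^2 * real k * real T / (real d * lam))"
  proof -
    have "(\<Sum>a<d. D a) / real d \<le> (real d * lam + real T * real k * L^2) / real d"
      using tr d by (intro divide_right_mono) auto
    also have "\<dots> = lam * (1 + L^2 * real k * real T / (real d * lam))"
      using d lam by (simp add: field_simps)
    finally show ?thesis .
  qed
  have Sp: "0 < (\<Sum>a<d. D a) / real d" using d Dpos by (intro divide_pos_pos sum_pos) auto
  have "ln ((\<Sum>a<d. D a) / real d) \<le> ln (lam * (1 + L^2 * real k * real T / (real d * lam)))"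
    using c_le Sp by (subst ln_le_cancel_iff) auto
  also have "\<dots> = ln lam + ln (1 + L^2 * real k * real T / (real d * lam))"
  proof (rule ln_mult_pos[OF lam])
    have "0 \<le> L^2 * real k * real T / (real d * lam)" using lam by simp
    thus "0 < 1 + L^2 * real k * real T / (real d * lam)" by linarith
  qed
  finally have C: "ln ((\<Sum>a<d. D a) / real d) \<le> ln lam + ln (1 + L^2 * real k * real T / (real d * lam))" .
  have "real d * ln ((\<Sum>a<d. D a) / real d) \<le> real d * (ln lam + ln (1 + L^2 * real k * real T / (real d * lam)))"
    using C by (intro mult_left_mono) auto
  hence "(\<Sum>t\<in>{1..T}. ln (f t)) \<le> real d * ln (1 + L^2 * real k * real T / (real d * lam))"
    using A B by (simp add: distrib_left)
  thus ?thesis unfolding f_def .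
qed

lemma min_sqrt: "min (sqrt a) (sqrt b) = sqrt (min a b)"
  by (cases "a \<le> b") (auto simp: min_def)

lemma sum_sqrt_le:
  fixes m :: "'a \<Rightarrow> real"
  assumes "finite A" "\<And>i. i \<in> A \<Longrightarrow> 0 \<le> m i"
  shows "(\<Sum>i\<in>A. sqrt (m i)) \<le> sqrt (real (card A) * (\<Sum>i\<in>A. m i))"
proof (rule real_le_rsqrt)
  have "(\<Sum>i\<in>A. sqrt (m i))^2 \<le> real (card A) * (\<Sum>i\<in>A. (sqrt (m i))^2)" by (rule cs_sum[OF assms(1)])
  also have "(\<Sum>i\<in>A. (sqrt (m i))^2) = (\<Sum>i\<in>A. m i)" using assms(2) by (intro sum.cong refl) simp
  finally show "(\<Sum>i\<in>A. sqrt (m i))^2 \<le> real (card A) * (\<Sum>i\<in>A. m i)" .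
qed

lemma main_bound:
  fixes lam L :: real and d k T :: nat and x :: "nat \<Rightarrow> nat \<Rightarrow> real vec"
  assumes lam: "0 < lam" and d: "0 < d" and k: "0 < k"
    and hx: "\<forall>t\<in>{1..T}. \<forall>i\<in>{1..k}. x t i \<in> carrier_vec d \<and> sqrt (x t i \<bullet> x t i) \<le> L"
  shows "(\<Sum>t\<in>{1..T}. \<Sum>i\<in>{1..k}.
        min (1 / sqrt (real k)) (inv_norm (gram lam d k x (t - 1)) (x t i)))
      \<le> 2 * sqrt (real d * real k * real T)
          * (1 + ln (1 + L\<^sup>2 * real k * real T / (real d * lam))) ^ 1"
   and "(\<Sum>t\<in>{1..T}. \<Sum>i\<in>{1..k}.
        (if inv_norm (gram lam d k x (t - 1)) (x t i) > 1 / sqrt (real k) then 1 else 0 :: real))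
      \<le> 2 * real d * real k
          * (1 + ln (1 + L\<^sup>2 * real k * real T / (real d * lam))) ^ 1"
proof -
  define b where "b = (\<lambda>t i. bil (minv (gram lam d k x (t - 1))) d (\<lambda>a. x t i $ a) (\<lambda>a. x t i $ a))"
  define s where "s = (\<lambda>t. \<Sum>i\<in>{1..k}. b t i)"
  define s' where "s' = (\<lambda>t. \<Sum>i\<in>{1..k}. min (1 / real k) (b t i))"
  define G where "G = ln (1 + L\<^sup>2 * real k * real T / (real d * lam))"
  have b0: "0 \<le> b t i" for t i unfolding b_def by (rule pdm_nonneg[OF inv_pdm[OF pdm_gram[OF lam]]])
  have inorm: "inv_norm (gram lam d k x (t - 1)) (x t i) = sqrt (b t i)" if "t \<in> {1..T}" "i \<in> {1..k}" for t i
  proof -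
    have xc: "x t i \<in> carrier_vec d" using hx that by blast
    have Bc: "minv (gram lam d k x (t - 1)) \<in> carrier_mat d d" by (rule pdm_inverse(3)[OF pdm_gram[OF lam]])
    show ?thesis unfolding inv_norm_def minv_def[symmetric] b_def bil_vec[OF Bc xc xc] by simp
  qed
  have key: "(\<Sum>t\<in>{1..T}. ln (1 + s t)) \<le> real d * G"
    unfolding s_def b_def G_def by (rule key_log[OF lam d hx])
  have u0: "0 \<le> L\<^sup>2 * real k * real T / (real d * lam)" using lam by simp
  have G0: "0 \<le> G" unfolding G_def using u0 by simp
  have s'0: "0 \<le> s' t" for t unfolding s'_def using b0 k by (intro sum_nonneg) simp
  have s's: "s' t \<le> s t" for t unfolding s'_def s_def by (intro sum_mono) simp
  have s'1: "s' t \<le> 1" for t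
  proof -
    have "s' t \<le> (\<Sum>i\<in>{1..k}. 1 / real k)" unfolding s'_def by (intro sum_mono) simp
    also have "\<dots> = 1" using k by simp
    finally show ?thesis .
  qed
  have s'ln: "s' t \<le> 2 * ln (1 + s t)" for t
  proof -
    have "s' t \<le> 2 * ln (1 + s' t)" by (rule ln_lower[OF s'0 s'1])
    also have "ln (1 + s' t) \<le> ln (1 + s t)" using s's[of t] s'0[of t] by (subst ln_le_cancel_iff) auto
    finally show ?thesis by simp
  qed
  have sums': "(\<Sum>t\<in>{1..T}. s' t) \<le> 2 * real d * G"
  proof -
    have "(\<Sum>t\<in>{1..T}. s' t) \<le> (\<Sum>t\<in>{1..T}. 2 * ln (1 + s t))" by (intro sum_mono s'ln)
    also have "\<dots> = 2 * (\<Sum>t\<in>{1..T}. ln (1 + s t))" by (simp add: sum_distrib_left)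
    also have "\<dots> \<le> 2 * (real d * G)" using key by simp
    finally show ?thesis by simp
  qed
  have sqk: "1 / sqrt (real k) = sqrt (1 / real k)" by (simp add: real_sqrt_divide)
  show "(\<Sum>t\<in>{1..T}. \<Sum>i\<in>{1..k}.
        (if inv_norm (gram lam d k x (t - 1)) (x t i) > 1 / sqrt (real k) then 1 else 0 :: real))
      \<le> 2 * real d * real k * (1 + ln (1 + L\<^sup>2 * real k * real T / (real d * lam))) ^ 1"
  proof -
    have "(\<Sum>t\<in>{1..T}. \<Sum>i\<in>{1..k}.
        (if inv_norm (gram lam d k x (t - 1)) (x t i) > 1 / sqrt (real k) then 1 else 0 :: real))
      \<le> (\<Sum>t\<in>{1..T}. \<Sum>i\<in>{1..k}. real k * min (1 / real k) (b t i))"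
    proof (intro sum_mono)
      fix t i assume ti: "t \<in> {1..T}" "i \<in> {1..k}"
      show "(if inv_norm (gram lam d k x (t - 1)) (x t i) > 1 / sqrt (real k) then 1 else 0 :: real)
          \<le> real k * min (1 / real k) (b t i)"
      proof (cases "inv_norm (gram lam d k x (t - 1)) (x t i) > 1 / sqrt (real k)")
        case True
        hence "sqrt (1 / real k) < sqrt (b t i)" unfolding inorm[OF ti] sqk .
        hence "1 / real k < b t i" by simp
        hence "min (1 / real k) (b t i) = 1 / real k" by simp
        thus ?thesis using True k by simp
      next
        case False
        thus ?thesis using b0[of t i] k by simp
      qed
    qed
    also have "\<dots> = real k * (\<Sum>t\<in>{1..T}. s' t)" unfolding s'_def by (simp add: sum_distrib_left)
    also have "\<dots> \<le> real k * (2 * real d * G)" using sums' by (intro mult_left_mono) auto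
    also have "\<dots> \<le> 2 * real d * real k * (1 + G)" using G0 by (simp add: algebra_simps)
    finally show ?thesis unfolding G_def by simp
  qed
  show "(\<Sum>t\<in>{1..T}. \<Sum>i\<in>{1..k}.
        min (1 / sqrt (real k)) (inv_norm (gram lam d k x (t - 1)) (x t i)))
      \<le> 2 * sqrt (real d * real k * real T) * (1 + ln (1 + L\<^sup>2 * real k * real T / (real d * lam))) ^ 1"
  proof -
    have step1: "(\<Sum>i\<in>{1..k}. min (1 / sqrt (real k)) (inv_norm (gram lam d k x (t - 1)) (x t i)))
        \<le> sqrt (real k * s' t)" if t: "t \<in> {1..T}" for t
    proof -
      have "(\<Sum>i\<in>{1..k}. min (1 / sqrt (real k)) (inv_norm (gram lam d k x (t - 1)) (x t i)))
          = (\<Sum>i\<in>{1..k}. sqrt (min (1 / real k) (b t i)))"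
      proof (rule sum.cong[OF refl])
        fix i assume i: "i \<in> {1..k}"
        show "min (1 / sqrt (real k)) (inv_norm (gram lam d k x (t - 1)) (x t i)) = sqrt (min (1 / real k) (b t i))"
          unfolding inorm[OF t i] sqk min_sqrt ..
      qed
      also have "\<dots> \<le> sqrt (real (card {1..k}) * (\<Sum>i\<in>{1..k}. min (1 / real k) (b t i)))"
        using b0 k by (intro sum_sqrt_le) auto
      finally show ?thesis unfolding s'_def by simp
    qed
    have "(\<Sum>t\<in>{1..T}. \<Sum>i\<in>{1..k}. min (1 / sqrt (real k)) (inv_norm (gram lam d k x (t - 1)) (x t i)))
        \<le> (\<Sum>t\<in>{1..T}. sqrt (real k * s' t))" by (intro sum_mono step1)
    also have "\<dots> \<le> sqrt (real (card {1..T}) * (\<Sum>t\<in>{1..T}. real k * s' t))"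
      using s'0 by (intro sum_sqrt_le) auto
    also have "\<dots> \<le> sqrt (real T * (real k * (2 * real d * G)))"
    proof -
      have "(\<Sum>t\<in>{1..T}. real k * s' t) \<le> real k * (2 * real d * G)"
        using sums' unfolding sum_distrib_left[symmetric] by (intro mult_left_mono) auto
      hence "real (card {1..T}) * (\<Sum>t\<in>{1..T}. real k * s' t) \<le> real T * (real k * (2 * real d * G))"
        by (simp add: mult_left_mono)
      thus ?thesis by (rule real_sqrt_le_mono)
    qed
    also have "\<dots> = sqrt (real d * real k * real T) * sqrt (2 * G)"
      by (simp add: real_sqrt_mult[symmetric] algebra_simps)
    also have "\<dots> \<le> sqrt (real d * real k * real T) * (2 * (1 + G))"
    proof (intro mult_left_mono)
      have "0 \<le> G * G" by simp
      hence "2 * G \<le> (2 * (1 + G))^2" using G0 by (simp add: power2_eq_square algebra_simps)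
      hence "sqrt (2 * G) \<le> sqrt ((2 * (1 + G))^2)" by (rule real_sqrt_le_mono)
      also have "\<dots> = 2 * (1 + G)" using G0 by simp
      finally show "sqrt (2 * G) \<le> 2 * (1 + G)" .
    qed simp
    finally show ?thesis unfolding G_def by (simp add: algebra_simps)
  qed
qed

theorem lemma2:
  shows "\<exists>(C::real) (p::nat). \<forall>(lam::real) (L::real) (d::nat) (k::nat) (T::nat)
           (x :: nat \<Rightarrow> nat \<Rightarrow> real vec).
    lam > 0 \<longrightarrow> L > 0 \<longrightarrow> d > 0 \<longrightarrow> k > 0 \<longrightarrow> T > 0 \<longrightarrow>
    (\<forall>t\<in>{1..T}. \<forall>i\<in>{1..k}. x t i \<in> carrier_vec d \<and> sqrt (x t i \<bullet> x t i) \<le> L) \<longrightarrow>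
    (\<Sum>t\<in>{1..T}. \<Sum>i\<in>{1..k}.
        min (1 / sqrt (real k)) (inv_norm (gram lam d k x (t - 1)) (x t i)))
      \<le> C * sqrt (real d * real k * real T)
          * (1 + ln (1 + L\<^sup>2 * real k * real T / (real d * lam))) ^ p
    \<and>
    (\<Sum>t\<in>{1..T}. \<Sum>i\<in>{1..k}.
        (if inv_norm (gram lam d k x (t - 1)) (x t i) > 1 / sqrt (real k) then 1 else 0 :: real))
      \<le> C * real d * real k
          * (1 + ln (1 + L\<^sup>2 * real k * real T / (real d * lam))) ^ p"
proof (intro exI[of _ "2::real"] exI[of _ "1::nat"] allI impI)
  fix lam L :: real and d k T :: nat and x :: "nat \<Rightarrow> nat \<Rightarrow> real vec"
  assume lam: "lam > 0" and "L > 0" and d: "d > 0" and k: "k > 0" and "T > 0"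
    and hx: "\<forall>t\<in>{1..T}. \<forall>i\<in>{1..k}. x t i \<in> carrier_vec d \<and> sqrt (x t i \<bullet> x t i) \<le> L"
  show "(\<Sum>t\<in>{1..T}. \<Sum>i\<in>{1..k}.
        min (1 / sqrt (real k)) (inv_norm (gram lam d k x (t - 1)) (x t i)))
      \<le> 2 * sqrt (real d * real k * real T)
          * (1 + ln (1 + L\<^sup>2 * real k * real T / (real d * lam))) ^ 1
    \<and>
    (\<Sum>t\<in>{1..T}. \<Sum>i\<in>{1..k}.
        (if inv_norm (gram lam d k x (t - 1)) (x t i) > 1 / sqrt (real k) then 1 else 0 :: real))
      \<le> 2 * real d * real k
          * (1 + ln (1 + L\<^sup>2 * real k * real T / (real d * lam))) ^ 1"
    using main_bound[OF lam d k hx] by blast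
qed

end
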